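(* For every query $Q$ of the query sublanguage $\mathcal{L}^{\mathrm{query}}$, the rewriting system $\mathcal{R}^{\mathrm{query}}_{\Sigma,\mathcal{D}}(Q)$ is terminating.
   Context: Setting: $\Sigma$ is a signature of facts containing sorts $\mathsf{Fact}$ and $\mathsf{Bool}$, and $\mathcal{D}$ is a $\Sigma$-algebra of facts (data types defined by directed equations and equational attributes; every ground Boolean term simplifies to true or false). A database is a finite multiset of facts, built with an associative-commutative operator $\circ$ with identity $\emptyset$. Patterns are multisets of (possibly non-ground) facts wrapped by modalities $[\_]_!$ (fact kept), $[\_]_?$ (fact considered at most once during a quantifier evaluation but not removed), $[\_]_0$ (fact deleted) and a modality for fresh facts; a pattern is terminating and preserving if it uses only $[\_]_!$ and $[\_]_?$ and contains at least one fact under $[\_]_?$. Conditions are built from $\mathsf{False}$, $\{B\}$ ($B$ Boolean term), negation, disjunction and $\exists P.\psi$ with $P$ a terminating and preserving pattern. Queries of $\mathcal{L}^{\mathrm{query}}$ are built from $\emptyset$, facts $f$, union $Q\oplus Q'$ (multiset union of results), conditionals $\phi\Rightarrow Q$ ($\phi$ a condition), and iteration $\mathrm{from}\ P.Q$ with $P$ a terminating and preserving pattern. The rewriting system $\mathcal{R}^{\mathrm{query}}_{\Sigma,\mathcal{D}}(Q)$ rewrites top-level state terms $\{F,F',S\}^q$, where $F$ is the database, $F'$ the partial answer and $S$ a stack of frames indexed by subqueries of $Q$ together with the current substitution; evaluation starts from $\mathrm{Init}_Q(F)=\{F,\emptyset,[\,]_Q\}^q$ and normal forms are $\mathrm{Ans}(F')$.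 Union frames are split into two frames for the arguments, a fact frame adds the instantiated fact to the partial answer, a conditional frame embeds the (terminating) stack evaluation of the condition and then either evaluates the body or is dropped, and $\mathrm{from}\ P.R$ is evaluated with an iterator frame holding an iterator state (initially the whole database): each unfolding step matches the $[\_]_!$ and $[\_]_?$ facts of $P$ against the iterator state, removes the matched $[\_]_?$ facts from it and pushes a frame for $R$ with the extended substitution; the iterator frame is removed when no match remains. *)

theory Defs
  imports Main "HOL-Library.Multiset"
begin

text \<open>The algebra of facts D is kept abstract. Non-ground fact terms have type 't,
  Boolean terms type 'b, variables type 'x, data values (canonical forms of ground
  data terms) type 'd, and ground facts (canonical forms) type 'v.  The algebra enters only through
    inst  : instantiate a fact term under a substitution and simplify to a ground fact,
    bval  : instantiate a Boolean term and simplify it (to true or false),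
    fvars : the variables of a fact term.\<close>

datatype modality = MKeep | MOnce | MDel | MFresh
  \<comment> \<open>[_]_!, [_]_?, [_]_0, fresh\<close>

type_synonym 't pat = "(modality \<times> 't) multiset"

definition term_pres :: "'t pat \<Rightarrow> bool" where
  "term_pres P \<longleftrightarrow> (\<forall>p\<in>#P. fst p \<in> {MKeep, MOnce}) \<and> (\<exists>p\<in>#P. fst p = MOnce)"

datatype ('t, 'b) cond =
    CFalse
  | CBool 'b
  | CNeg "('t, 'b) cond"
  | COr "('t, 'b) cond" "('t, 'b) cond"
  | CEx "'t pat" "('t, 'b) cond"

datatype ('t, 'b) query =
    QEmpty
  | QFact 't
  | QUnion "('t, 'b) query" "('t, 'b) query"
  | QIf "('t, 'b) cond" "('t, 'b) query"
  | QFrom "'t pat" "('t, 'b) query"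

fun wf_cond :: "('t, 'b) cond \<Rightarrow> bool" where
  "wf_cond CFalse = True"
| "wf_cond (CBool B) = True"
| "wf_cond (CNeg c) = wf_cond c"
| "wf_cond (COr c d) = (wf_cond c \<and> wf_cond d)"
| "wf_cond (CEx P c) = (term_pres P \<and> wf_cond c)"

text \<open>Membership in L^query: all patterns (in iterations and in existential
  conditions) are terminating and preserving.\<close>
fun wf_query :: "('t, 'b) query \<Rightarrow> bool" where
  "wf_query QEmpty = True"
| "wf_query (QFact f) = True"
| "wf_query (QUnion q r) = (wf_query q \<and> wf_query r)"
| "wf_query (QIf c q) = (wf_cond c \<and> wf_query q)"
| "wf_query (QFrom P q) = (term_pres P \<and> wf_query q)"

fun subc :: "('t, 'b) cond \<Rightarrow> ('t, 'b) cond set" where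
  "subc CFalse = {CFalse}"
| "subc (CBool B) = {CBool B}"
| "subc (CNeg c) = insert (CNeg c) (subc c)"
| "subc (COr c d) = insert (COr c d) (subc c \<union> subc d)"
| "subc (CEx P c) = insert (CEx P c) (subc c)"

fun subq :: "('t, 'b) query \<Rightarrow> ('t, 'b) query set" where
  "subq QEmpty = {QEmpty}"
| "subq (QFact f) = {QFact f}"
| "subq (QUnion q r) = insert (QUnion q r) (subq q \<union> subq r)"
| "subq (QIf c q) = insert (QIf c q) (subq q)"
| "subq (QFrom P q) = insert (QFrom P q) (subq q)"

definition qconds :: "('t, 'b) query \<Rightarrow> ('t, 'b) cond set" where
  "qconds Q = (\<Union>{subc c | c q. QIf c q \<in> subq Q})"

text \<open>matches inst fvars \<sigma> P I \<sigma>' K: the [_]_! and [_]_? facts of P, instantiated by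
  the extension \<sigma>' of \<sigma> (binding exactly the additional variables of these facts),
  form a sub-multiset of the iterator state I; K is the multiset of matched [_]_? facts
  (which is removed from the iterator state).\<close>
definition matches ::
  "(('x \<rightharpoonup> 'd) \<Rightarrow> 't \<Rightarrow> 'v) \<Rightarrow> ('t \<Rightarrow> 'x set) \<Rightarrow> ('x \<rightharpoonup> 'd) \<Rightarrow> 't pat
   \<Rightarrow> 'v multiset \<Rightarrow> ('x \<rightharpoonup> 'd) \<Rightarrow> 'v multiset \<Rightarrow> bool" where
  "matches inst fvars \<sigma> P I \<sigma>' K \<longleftrightarrow>
     \<sigma> \<subseteq>\<^sub>m \<sigma>' \<and>
     dom \<sigma>' = dom \<sigma> \<union> (\<Union>p\<in>{p \<in> set_mset P. fst p \<in> {MKeep, MOnce}}. fvars (snd p)) \<and>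
     image_mset (\<lambda>p. inst \<sigma>' (snd p)) (filter_mset (\<lambda>p. fst p \<in> {MKeep, MOnce}) P) \<subseteq># I \<and>
     K = image_mset (\<lambda>p. inst \<sigma>' (snd p)) (filter_mset (\<lambda>p. fst p = MOnce) P)"

datatype ('t, 'b, 'x, 'd, 'v) cframe =
    CEvalF "('t, 'b) cond" "'x \<rightharpoonup> 'd"
  | CNegF                                    \<comment> \<open>negate the result of the frame above\<close>
  | COrF "('t, 'b) cond" "'x \<rightharpoonup> 'd"          \<comment> \<open>right disjunct still pending\<close>
  | CExIt "'t pat" "('t, 'b) cond" "'x \<rightharpoonup> 'd" "'v multiset"

text \<open>A condition evaluation state: a stack of frames (head = top) and a result
  register (None while a frame is being evaluated, Some b when a value is returned).\<close>
type_synonym ('t, 'b, 'x, 'd, 'v) cstate = "('t, 'b, 'x, 'd, 'v) cframe list \<times> bool option"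

inductive cstep ::
  "(('x \<rightharpoonup> 'd) \<Rightarrow> 't \<Rightarrow> 'v) \<Rightarrow> (('x \<rightharpoonup> 'd) \<Rightarrow> 'b \<Rightarrow> bool) \<Rightarrow> ('t \<Rightarrow> 'x set) \<Rightarrow> 'v multiset
   \<Rightarrow> ('t, 'b, 'x, 'd, 'v) cstate \<Rightarrow> ('t, 'b, 'x, 'd, 'v) cstate \<Rightarrow> bool"
  for inst bval fvars F where
  c_false: "cstep inst bval fvars F (CEvalF CFalse \<sigma> # S, None) (S, Some False)"
| c_bool: "cstep inst bval fvars F (CEvalF (CBool B) \<sigma> # S, None) (S, Some (bval \<sigma> B))"
| c_neg: "cstep inst bval fvars F (CEvalF (CNeg c) \<sigma> # S, None) (CEvalF c \<sigma> # CNegF # S, None)"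
| c_neg_ret: "cstep inst bval fvars F (CNegF # S, Some b) (S, Some (\<not> b))"
| c_or: "cstep inst bval fvars F (CEvalF (COr c d) \<sigma> # S, None) (CEvalF c \<sigma> # COrF d \<sigma> # S, None)"
| c_or_true: "cstep inst bval fvars F (COrF d \<sigma> # S, Some True) (S, Some True)"
| c_or_false: "cstep inst bval fvars F (COrF d \<sigma> # S, Some False) (CEvalF d \<sigma> # S, None)"
| c_ex: "cstep inst bval fvars F (CEvalF (CEx P c) \<sigma> # S, None) (CExIt P c \<sigma> F # S, None)"
| c_ex_unfold: "matches inst fvars \<sigma> P I \<sigma>' K \<Longrightarrow>
    cstep inst bval fvars F (CExIt P c \<sigma> I # S, None) (CEvalF c \<sigma>' # CExIt P c \<sigma> (I - K) # S, None)"
| c_ex_none: "\<not> (\<exists>\<sigma>' K. matches inst fvars \<sigma> P I \<sigma>' K) \<Longrightarrow>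
    cstep inst bval fvars F (CExIt P c \<sigma> I # S, None) (S, Some False)"
| c_ex_true: "cstep inst bval fvars F (CExIt P c \<sigma> I # S, Some True) (S, Some True)"
| c_ex_false: "cstep inst bval fvars F (CExIt P c \<sigma> I # S, Some False) (CExIt P c \<sigma> I # S, None)"

datatype ('t, 'b, 'x, 'd, 'v) qframe =
    QEvalF "('t, 'b) query" "'x \<rightharpoonup> 'd"
  | QIterF "'t pat" "('t, 'b) query" "'x \<rightharpoonup> 'd" "'v multiset"
  | QCondF "('t, 'b) cond" "('t, 'b) query" "'x \<rightharpoonup> 'd" "('t, 'b, 'x, 'd, 'v) cframe list \<times> bool option"

datatype ('t, 'b, 'x, 'd, 'v) qstate =
    QSt "'v multiset" "'v multiset" "('t, 'b, 'x, 'd, 'v) qframe list"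
      \<comment> \<open>{F, F', S}^q: database, partial answer, stack (head = top)\<close>
  | Ans "'v multiset"

definition Init :: "('t, 'b) query \<Rightarrow> 'v multiset \<Rightarrow> ('t, 'b, 'x, 'd, 'v) qstate" where
  "Init Q F = QSt F {#} [QEvalF Q Map.empty]"

inductive qstep ::
  "(('x \<rightharpoonup> 'd) \<Rightarrow> 't \<Rightarrow> 'v) \<Rightarrow> (('x \<rightharpoonup> 'd) \<Rightarrow> 'b \<Rightarrow> bool) \<Rightarrow> ('t \<Rightarrow> 'x set)
   \<Rightarrow> ('t, 'b, 'x, 'd, 'v) qstate \<Rightarrow> ('t, 'b, 'x, 'd, 'v) qstate \<Rightarrow> bool"
  for inst bval fvars where
  q_done: "qstep inst bval fvars (QSt F A []) (Ans A)"
| q_empty: "qstep inst bval fvars (QSt F A (QEvalF QEmpty \<sigma> # S)) (QSt F A S)"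
| q_fact: "qstep inst bval fvars (QSt F A (QEvalF (QFact f) \<sigma> # S)) (QSt F (add_mset (inst \<sigma> f) A) S)"
| q_union: "qstep inst bval fvars (QSt F A (QEvalF (QUnion q r) \<sigma> # S))
             (QSt F A (QEvalF q \<sigma> # QEvalF r \<sigma> # S))"
| q_if: "qstep inst bval fvars (QSt F A (QEvalF (QIf c q) \<sigma> # S))
          (QSt F A (QCondF c q \<sigma> ([CEvalF c \<sigma>], None) # S))"
| q_if_step: "cstep inst bval fvars F cs cs' \<Longrightarrow>
    qstep inst bval fvars (QSt F A (QCondF c q \<sigma> cs # S)) (QSt F A (QCondF c q \<sigma> cs' # S))"
| q_if_true: "qstep inst bval fvars (QSt F A (QCondF c q \<sigma> ([], Some True) # S)) (QSt F A (QEvalF q \<sigma> # S))"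
| q_if_false: "qstep inst bval fvars (QSt F A (QCondF c q \<sigma> ([], Some False) # S)) (QSt F A S)"
| q_from: "qstep inst bval fvars (QSt F A (QEvalF (QFrom P q) \<sigma> # S)) (QSt F A (QIterF P q \<sigma> F # S))"
| q_from_unfold: "matches inst fvars \<sigma> P I \<sigma>' K \<Longrightarrow>
    qstep inst bval fvars (QSt F A (QIterF P q \<sigma> I # S)) (QSt F A (QEvalF q \<sigma>' # QIterF P q \<sigma> (I - K) # S))"
| q_from_none: "\<not> (\<exists>\<sigma>' K. matches inst fvars \<sigma> P I \<sigma>' K) \<Longrightarrow>
    qstep inst bval fvars (QSt F A (QIterF P q \<sigma> I # S)) (QSt F A S)"

fun wf_cframe :: "('t, 'b) query \<Rightarrow> ('t, 'b, 'x, 'd, 'v) cframe \<Rightarrow> bool" where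
  "wf_cframe Q (CEvalF c \<sigma>) = (c \<in> qconds Q)"
| "wf_cframe Q CNegF = True"
| "wf_cframe Q (COrF d \<sigma>) = (d \<in> qconds Q)"
| "wf_cframe Q (CExIt P c \<sigma> I) = (CEx P c \<in> qconds Q)"

fun wf_qframe :: "('t, 'b) query \<Rightarrow> ('t, 'b, 'x, 'd, 'v) qframe \<Rightarrow> bool" where
  "wf_qframe Q (QEvalF q \<sigma>) = (q \<in> subq Q)"
| "wf_qframe Q (QIterF P q \<sigma> I) = (QFrom P q \<in> subq Q)"
| "wf_qframe Q (QCondF c q \<sigma> cs) = (QIf c q \<in> subq Q \<and> (\<forall>fr\<in>set (fst cs). wf_cframe Q fr))"

fun wf_qstate :: "('t, 'b) query \<Rightarrow> ('t, 'b, 'x, 'd, 'v) qstate \<Rightarrow> bool" where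
  "wf_qstate Q (QSt F A S) = (\<forall>fr\<in>set S. wf_qframe Q fr)"
| "wf_qstate Q (Ans A) = True"

definition R_query ::
  "(('x \<rightharpoonup> 'd) \<Rightarrow> 't \<Rightarrow> 'v) \<Rightarrow> (('x \<rightharpoonup> 'd) \<Rightarrow> 'b \<Rightarrow> bool) \<Rightarrow> ('t \<Rightarrow> 'x set) \<Rightarrow> ('t, 'b) query
   \<Rightarrow> ('t, 'b, 'x, 'd, 'v) qstate \<Rightarrow> ('t, 'b, 'x, 'd, 'v) qstate \<Rightarrow> bool" where
  "R_query inst bval fvars Q s t \<longleftrightarrow> wf_qstate Q s \<and> qstep inst bval fvars s t"

definition terminating :: "('a \<Rightarrow> 'a \<Rightarrow> bool) \<Rightarrow> bool" where
  "terminating r \<longleftrightarrow> \<not> (\<exists>f. \<forall>i. r (f i) (f (Suc i)))"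

end

theory Submission
  imports Defs
begin

fun csz :: "('t, 'b) cond \<Rightarrow> nat" where
  "csz CFalse = 1"
| "csz (CBool B) = 1"
| "csz (CNeg c) = csz c + 1"
| "csz (COr c d) = csz c + csz d + 1"
| "csz (CEx P c) = csz c + 1"

fun qsz :: "('t, 'b) query \<Rightarrow> nat" where
  "qsz QEmpty = 1"
| "qsz (QFact f) = 1"
| "qsz (QUnion q r) = qsz q + qsz r + 1"
| "qsz (QIf c q) = qsz q + 1"
| "qsz (QFrom P q) = qsz q + 1"

fun ckey :: "('t, 'b, 'x, 'd, 'v) cframe \<Rightarrow> nat \<times> nat" where
  "ckey (CEvalF c \<sigma>) = (2 * csz c + 1, 0)"
| "ckey CNegF = (0, 0)"
| "ckey (COrF d \<sigma>) = (2 * csz d + 2, 0)"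
| "ckey (CExIt P c \<sigma> I) = (2 * csz c + 2, size I)"

definition CFR :: "((nat \<times> nat) \<times> (nat \<times> nat)) set" where
  "CFR = less_than <*lex*> less_than"

definition regR :: "(bool option \<times> bool option) set" where
  "regR = inv_image less_than (\<lambda>r. if r = None then 0 else 1)"

definition CR :: "(('t, 'b, 'x, 'd, 'v) cstate \<times> ('t, 'b, 'x, 'd, 'v) cstate) set" where
  "CR = inv_image (mult1 CFR <*lex*> regR) (\<lambda>(S, r). (mset (map ckey S), r))"

lemma wf_CR: "wf CR"
  unfolding CR_def CFR_def regR_def
  by (intro wf_inv_image wf_lex_prod wf_mult1 wf_less_than)

lemma m0: "(M, add_mset a M) \<in> mult1 R"
  unfolding mult1_def mem_Collect_eq prod.case
  by (rule exI[of _ a], rule exI[of _ M], rule exI[of _ "{#}"]) auto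

lemma m1: "(b, a) \<in> R \<Longrightarrow> (add_mset b M, add_mset a M) \<in> mult1 R"
  unfolding mult1_def mem_Collect_eq prod.case
  by (rule exI[of _ a], rule exI[of _ M], rule exI[of _ "{#b#}"]) auto

lemma m2: "(b, a) \<in> R \<Longrightarrow> (c, a) \<in> R \<Longrightarrow> (add_mset b (add_mset c M), add_mset a M) \<in> mult1 R"
  unfolding mult1_def mem_Collect_eq prod.case
  by (rule exI[of _ a], rule exI[of _ M], rule exI[of _ "{#b, c#}"]) auto

lemma matches_K:
  assumes "matches inst fvars \<sigma> P I \<sigma>' K" "term_pres P"
  shows "K \<noteq> {#} \<and> K \<subseteq># I"
proof -
  have K: "K = image_mset (\<lambda>p. inst \<sigma>' (snd p)) (filter_mset (\<lambda>p. fst p = MOnce) P)"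
    and sub: "image_mset (\<lambda>p. inst \<sigma>' (snd p)) (filter_mset (\<lambda>p. fst p \<in> {MKeep, MOnce}) P) \<subseteq># I"
    using assms(1) unfolding matches_def by auto
  have "filter_mset (\<lambda>p. fst p = MOnce) P \<subseteq># filter_mset (\<lambda>p. fst p \<in> {MKeep, MOnce}) P"
    by (rule filter_mset_mono_strong) auto
  then have "K \<subseteq># image_mset (\<lambda>p. inst \<sigma>' (snd p)) (filter_mset (\<lambda>p. fst p \<in> {MKeep, MOnce}) P)"
    unfolding K by (rule image_mset_subseteq_mono)
  with sub have "K \<subseteq># I" by (meson subset_mset.order_trans)
  moreover have "K \<noteq> {#}"
    using assms(2) unfolding term_pres_def K by (auto simp: filter_mset_eq_conv)
  ultimately show ?thesis by blast
qed

lemma matches_size: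
  assumes "matches inst fvars \<sigma> P I \<sigma>' K" "term_pres P"
  shows "size (I - K) < size I"
proof -
  from matches_K[OF assms] have "K \<noteq> {#}" "K \<subseteq># I" by auto
  then show ?thesis
  proof -
    have "size K > 0" using \<open>K \<noteq> {#}\<close> by (simp add: nonempty_has_size)
    moreover have "size K \<le> size I" using \<open>K \<subseteq># I\<close> by (rule size_mset_mono)
    ultimately show ?thesis using size_Diff_submset[OF \<open>K \<subseteq># I\<close>] by simp
  qed
qed

lemma cstep_dec:
  assumes "cstep inst bval fvars F cs cs'"
    and "\<forall>P c \<sigma> I. CExIt P c \<sigma> I \<in> set (fst cs) \<longrightarrow> term_pres P"
  shows "(cs', cs) \<in> CR"
  using assms
proof (induction rule: cstep.induct)
  case (c_ex_unfold \<sigma> P I \<sigma>' K c S)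
  have "term_pres P" using c_ex_unfold.prems by auto
  then have "size (I - K) < size I" using matches_size[OF c_ex_unfold.hyps] by blast
  then show ?case unfolding CR_def by (auto simp: CFR_def intro!: m2)
next
  case (c_ex_false P c \<sigma> I S)
  then show ?case by (simp add: CR_def regR_def)
qed (auto simp: CR_def CFR_def intro: m0 m1 m2)

lemma subq_wf: "q \<in> subq Q \<Longrightarrow> wf_query Q \<Longrightarrow> wf_query q"
  by (induction Q) auto

lemma subc_wf: "c \<in> subc d \<Longrightarrow> wf_cond d \<Longrightarrow> wf_cond c"
  by (induction d) auto

lemma qconds_wf: "c \<in> qconds Q \<Longrightarrow> wf_query Q \<Longrightarrow> wf_cond c"
  unfolding qconds_def using subq_wf subc_wf by fastforce

fun qkey :: "('t, 'b, 'x, 'd, 'v) qframe \<Rightarrow> nat \<times> nat \<times> ('t, 'b, 'x, 'd, 'v) cstate" where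
  "qkey (QEvalF q \<sigma>) = (2 * qsz q + 1, 0, ([], None))"
| "qkey (QIterF P q \<sigma> I) = (2 * qsz q + 2, size I, ([], None))"
| "qkey (QCondF c q \<sigma> cs) = (2 * qsz q + 2, 0, cs)"

definition QR :: "((nat \<times> nat \<times> ('t, 'b, 'x, 'd, 'v) cstate) \<times> (nat \<times> nat \<times> ('t, 'b, 'x, 'd, 'v) cstate)) set" where
  "QR = less_than <*lex*> (less_than <*lex*> CR)"

lemma wf_QR: "wf QR"
  unfolding QR_def by (intro wf_lex_prod wf_less_than wf_CR)

fun qm :: "('t, 'b, 'x, 'd, 'v) qstate \<Rightarrow> (nat \<times> nat \<times> ('t, 'b, 'x, 'd, 'v) cstate) multiset" where
  "qm (QSt F A S) = mset (map qkey S)"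
| "qm (Ans A) = {#}"

lemma qstep_dec:
  assumes "qstep inst bval fvars s t" "wf_qstate Q s" "wf_query Q" "\<forall>A. t \<noteq> Ans A"
  shows "(qm t, qm s) \<in> mult1 QR"
  using assms
proof (induction rule: qstep.induct)
  case (q_if_step F cs cs' A c q \<sigma> S)
  have "\<forall>P c \<sigma> I. CExIt P c \<sigma> I \<in> set (fst cs) \<longrightarrow> term_pres P"
  proof (intro allI impI)
    fix P c \<sigma> I assume "CExIt P c \<sigma> I \<in> set (fst cs)"
    then have "CEx P c \<in> qconds Q" using q_if_step.prems(1) by fastforce
    then show "term_pres P" using qconds_wf[OF _ q_if_step.prems(2)] by fastforce
  qed
  then have "(cs', cs) \<in> CR" using cstep_dec[OF q_if_step.hyps] by blast
  then show ?case by (auto simp: QR_def intro: m1)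
next
  case (q_from_unfold \<sigma> P I \<sigma>' K F A q S)
  have "term_pres P" using q_from_unfold.prems subq_wf by fastforce
  then have "size (I - K) < size I" using matches_size[OF q_from_unfold.hyps] by blast
  then show ?case by (auto simp: QR_def intro!: m2)
qed (auto simp: QR_def intro: m0 m1 m2)

lemma chain_False: "wf r \<Longrightarrow> (\<And>i. (g (Suc i), g i) \<in> r) \<Longrightarrow> False"
  using wf_iff_no_infinite_down_chain by blast

theorem theorem3:
  fixes inst :: "('x \<rightharpoonup> 'd) \<Rightarrow> 't \<Rightarrow> 'v"
    and bval :: "('x \<rightharpoonup> 'd) \<Rightarrow> 'b \<Rightarrow> bool"
    and fvars :: "'t \<Rightarrow> 'x set"
    and Q :: "('t, 'b) query"
  assumes "wf_query Q"
  shows "terminating (R_query inst bval fvars Q)"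
  unfolding terminating_def
proof
  assume "\<exists>f. \<forall>i. R_query inst bval fvars Q (f i) (f (Suc i))"
  then obtain f where f: "\<And>i. R_query inst bval fvars Q (f i) (f (Suc i))" by blast
  have noans: "\<forall>A. f i \<noteq> Ans A" for i
  proof (intro allI notI)
    fix A assume "f i = Ans A"
    then have "qstep inst bval fvars (Ans A) (f (Suc i))" using f[of i] by (simp add: R_query_def)
    then show False by (cases rule: qstep.cases)
  qed
  have "(qm (f (Suc i)), qm (f i)) \<in> mult1 QR" for i
    using f[of i] noans[of "Suc i"] assms qstep_dec unfolding R_query_def by blast
  then show False by (rule chain_False[OF wf_mult1[OF wf_QR]])
qed

end
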